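(* For any two-element set $E=\{x,y\}\subset\mathbb{N}$ we have $A_E=\{2\}\cup\Pi_x\cup\Pi_y\cup\Pi_{x-y}$.
   Context: $\mathbb{N}=\{1,2,3,\dots\}$; $\Pi$ is the set of primes; for a nonzero integer $z$, $\Pi_z$ is the set of prime divisors of $z$. For a nonempty finite set $E\subseteq\mathbb{N}$, $A_E=\{p\in\Pi:\exists k\in\mathbb{N}\ (E\subseteq\{0,k\}+p\mathbb{Z})\}$, where $\{0,k\}+p\mathbb{Z}=p\mathbb{Z}\cup(k+p\mathbb{Z})$. *)

theory Defs
  imports "HOL-Computational_Algebra.Primes"
begin

definition prime_divs :: "int \<Rightarrow> nat set" where
  "prime_divs z = {p. prime p \<and> int p dvd z}"

definition A_set :: "nat set \<Rightarrow> nat set" where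
  "A_set E = {p. prime p \<and> (\<exists>k::nat. k \<ge> 1 \<and>
      E \<subseteq> {e. int p dvd int e \<or> int p dvd (int e - int k)})}"

end

theory Submission
  imports Defs
begin

theorem lemma3p2:
  fixes x y :: nat
  assumes "x \<ge> 1" and "y \<ge> 1" and "x \<noteq> y"
  shows "A_set {x, y} = {2} \<union> prime_divs (int x) \<union> prime_divs (int y) \<union> prime_divs (int x - int y)"
proof (rule set_eqI, rule iffI)
  fix p assume "p \<in> A_set {x, y}"
  then obtain k :: nat where pp: "prime p" and hx: "int p dvd int x \<or> int p dvd (int x - int k)"
    and hy: "int p dvd int y \<or> int p dvd (int y - int k)"
    unfolding A_set_def by auto
  have "int p dvd int x \<or> int p dvd int y \<or> int p dvd (int x - int y)"
  proof -
    { assume "int p dvd (int x - int k)" "int p dvd (int y - int k)"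
      then have "int p dvd ((int x - int k) - (int y - int k))" by (rule dvd_diff)
      then have "int p dvd (int x - int y)" by simp }
    then show ?thesis using hx hy by blast
  qed
  then show "p \<in> {2} \<union> prime_divs (int x) \<union> prime_divs (int y) \<union> prime_divs (int x - int y)"
    using pp unfolding prime_divs_def by auto
next
  fix p assume "p \<in> {2} \<union> prime_divs (int x) \<union> prime_divs (int y) \<union> prime_divs (int x - int y)"
  then consider "p = 2" | "prime p" "int p dvd int x" | "prime p" "int p dvd int y"
    | "prime p" "int p dvd (int x - int y)" unfolding prime_divs_def by auto
  then show "p \<in> A_set {x, y}"
  proof cases
    case 1
    have "\<And>e::nat. 2 dvd int e \<or> 2 dvd (int e - int 1)" by presburger
    then show ?thesis using 1 unfolding A_set_def by auto
  next
    case 2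
    then show ?thesis unfolding A_set_def using assms
      by (intro CollectI conjI exI[of _ y]) auto
  next
    case 3
    then show ?thesis unfolding A_set_def using assms
      by (intro CollectI conjI exI[of _ x]) auto
  next
    case 4
    have "int p dvd (int y - int x)" using 4(2)
      by (metis dvd_minus_iff minus_diff_eq)
    then show ?thesis unfolding A_set_def using assms 4
      by (intro CollectI conjI exI[of _ x]) auto
  qed
qed

end
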